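(* Let $n \in \mathbb{N}$ and let $p = (p_1,\ldots,p_n) \in \Delta_n$. Then \[ \frac{n \sum_{i=1}^n p_i^2 - 1}{2\,(n\|p\|_\infty + 1)} \;\le\; \sum_{i=1}^n p_i \log(p_i) + \log(n) \;\le\; n \sum_{i=1}^n p_i^2 - 1 . \] In particular, whenever $p \neq \frac{1}{n}1_n$ (so that $n\sum_i p_i^2 - 1 > 0$), \[ \frac{1}{2(n \|p\|_\infty + 1)} \le \frac{\sum_{i = 1}^{n} p_i \log(p_i) + \log(n)}{n \sum_{i = 1}^{n} p_i^2 - 1} \le 1. \]
   Context: $\Delta_n := \{a \in \mathbb{R}_+^n : \sum_{i=1}^n a_i = 1\}$ is the probability simplex, $\|p\|_\infty = \max_i |p_i|$, $1_n$ is the all-ones vector in $\mathbb{R}^n$, and the convention $0 \log 0 = 0$ is used. *)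

theory Defs
  imports "HOL-Analysis.Analysis"
begin

definition prob_simplex :: "nat \<Rightarrow> (nat \<Rightarrow> real) set" where
  "prob_simplex n = {a. (\<forall>i\<in>{1..n}. 0 \<le> a i) \<and> (\<Sum>i=1..n. a i) = 1}"

definition xlogx :: "real \<Rightarrow> real" where
  "xlogx x = (if x = 0 then 0 else x * ln x)"

definition sup_norm :: "nat \<Rightarrow> (nat \<Rightarrow> real) \<Rightarrow> real" where
  "sup_norm n p = Max ((\<lambda>i. \<bar>p i\<bar>) ` {1..n})"

end

theory Submission
  imports Defs
begin

lemma lemA:
  fixes x :: real assumes "1 \<le> x"
  shows "(x-1)/x + (x-1)^2/(2*x^2) \<le> ln x"
proof -
  let ?h = "\<lambda>x::real. ln x - (x-1)/x - (x-1)^2/(2*x^2)"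
  have d: "(?h has_real_derivative (x-1)^2/x^3) (at x)" if "0 < x" for x :: real
  proof -
    have "(?h has_real_derivative 1/x - ((1*x - (x-1)*1)/x^2) - ((2*(x-1)*1)*(2*x^2) - (x-1)^2*(2*(2*x)))/(2*x^2)^2) (at x)"
      using that by (auto intro!: derivative_eq_intros simp: power2_eq_square)
    moreover have "1/x - ((1*x - (x-1)*1)/x^2) - ((2*(x-1)*1)*(2*x^2) - (x-1)^2*(2*(2*x)))/(2*x^2)^2 = (x-1)^2/x^3"
      using that by (simp add: field_simps power2_eq_square power3_eq_cube)
    ultimately show ?thesis by metis
  qed
  have "?h 1 \<le> ?h x"
    apply (rule DERIV_nonneg_imp_nondecreasing[OF assms])
    using d by (meson dual_order.trans order.strict_trans1 zero_less_one zero_le_power2 divide_nonneg_pos zero_less_power less_le_trans)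
  then show ?thesis by simp
qed

lemma lemB:
  fixes x :: real assumes "0 < x" "x \<le> 1"
  shows "(1-x)^2/2 \<le> x * ln x - x + 1"
proof -
  let ?k = "\<lambda>x::real. x * ln x - x + 1 - (1-x)^2/2"
  have d: "(?k has_real_derivative ln x + 1 - x) (at x)" if "0 < x" for x :: real
  proof -
    have "(?k has_real_derivative (1 * ln x + x * (1/x)) - 1 - (2*(1-x)*(-1))/2) (at x)"
      using that by (auto intro!: derivative_eq_intros simp: power2_eq_square)
    moreover have "(1 * ln x + x * (1/x)) - 1 - (2*(1-x)*(-1))/2 = ln x + 1 - x"
      using that by (simp add: field_simps)
    ultimately show ?thesis by metis
  qed
  have "?k 1 \<le> ?k x"
    apply (rule DERIV_nonpos_imp_nonincreasing[OF assms(2)])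
    using d assms ln_le_minus_one by (smt (verit))
  then show ?thesis by simp
qed


lemma keyq:
  fixes q c :: real assumes "0 < q" "q \<le> c" "1 \<le> c"
  shows "(q-1)^2/(2*c) \<le> q * ln q - q + 1"
proof (cases "q \<ge> 1")
  case True
  have "(q-1)/q + (q-1)^2/(2*q^2) \<le> ln q" by (rule lemA[OF True])
  then have "q*((q-1)/q + (q-1)^2/(2*q^2)) \<le> q * ln q" using assms by (simp add: mult_left_mono)
  moreover have "q*((q-1)/q + (q-1)^2/(2*q^2)) = q - 1 + (q-1)^2/(2*q)"
    using assms by (simp add: field_simps power2_eq_square)
  moreover have "(q-1)^2/(2*c) \<le> (q-1)^2/(2*q)"
    using assms by (intro divide_left_mono) auto
  ultimately show ?thesis by linarith
next
  case False
  have "(1-q)^2/2 \<le> q * ln q - q + 1" using lemB[of q] False assms by simp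
  moreover have "(q-1)^2/(2*c) \<le> (q-1)^2/2"
    using assms by (intro divide_left_mono) auto
  ultimately show ?thesis by (simp add: power2_commute)
qed

lemma pt:
  fixes x M :: real assumes "n \<ge> 1" "0 \<le> x" "x \<le> M"
  shows "(real n * x - 1)^2/(2*(real n * M + 1)*real n) + x - 1/real n \<le> xlogx x + x*ln (real n)"
    and "xlogx x + x*ln (real n) \<le> real n*x^2 - x"
proof -
  have n0: "real n \<ge> 1" using assms by simp
  have s0: "M \<ge> 0" using assms by simp
  have c1: "real n * M + 1 \<ge> 1" using n0 s0 by simp
  have "(real n * x - 1)^2/(2*(real n * M + 1)*real n) + x - 1/real n \<le> xlogx x + x*ln (real n)
     \<and> xlogx x + x*ln (real n) \<le> real n*x^2 - x"
  proof (cases "x = 0")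
    case True
    have "1/(2*(real n * M + 1)*real n) \<le> 1/real n"
      using n0 c1 by (intro divide_left_mono) auto
    then show ?thesis using True by (simp add: xlogx_def)
  next
    case False
    define q where "q = real n * x"
    have xp: "x > 0" using False assms by simp
    have qp: "q > 0" using xp n0 unfolding q_def by simp
    have eq: "xlogx x + x*ln (real n) = q * ln q / real n"
      using xp n0 unfolding q_def xlogx_def by (simp add: ln_mult field_simps)
    have "ln q \<le> q - 1" using ln_le_minus_one qp by simp
    then have "q * ln q \<le> q * (q-1)" using qp by (simp add: mult_left_mono)
    then have up: "q * ln q / real n \<le> q*(q-1)/real n" using n0 by (simp add: divide_right_mono)
    have "q*(q-1)/real n = real n*x^2 - x" unfolding q_def using n0 by (simp add: field_simps power2_eq_square)
    note up' = up[unfolded this]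
    have "q \<le> real n * M + 1" unfolding q_def using assms n0 by (smt (verit) mult_left_mono of_nat_0_le_iff)
    from keyq[OF qp this c1] have "(q-1)^2/(2*(real n * M + 1)) / real n \<le> (q * ln q - q + 1)/real n"
      using n0 by (intro divide_right_mono) auto
    moreover have "(q-1)^2/(2*(real n * M + 1)) / real n = (real n * x - 1)^2/(2*(real n * M + 1)*real n)"
      unfolding q_def by simp
    moreover have "(q * ln q - q + 1)/real n = q * ln q / real n - x + 1/real n"
      unfolding q_def using n0 by (simp add: field_simps)
    ultimately show ?thesis using eq up' by linarith
  qed
  then show "(real n * x - 1)^2/(2*(real n * M + 1)*real n) + x - 1/real n \<le> xlogx x + x*ln (real n)"
    and "xlogx x + x*ln (real n) \<le> real n*x^2 - x" by auto
qed

theorem proposition1: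
  fixes n :: nat and p :: "nat \<Rightarrow> real"
  assumes "p \<in> prob_simplex n"
  shows "(real n * (\<Sum>i=1..n. (p i)^2) - 1) / (2 * (real n * sup_norm n p + 1))
           \<le> (\<Sum>i=1..n. xlogx (p i)) + ln (real n)
       \<and> (\<Sum>i=1..n. xlogx (p i)) + ln (real n) \<le> real n * (\<Sum>i=1..n. (p i)^2) - 1
       \<and> ((\<exists>i\<in>{1..n}. p i \<noteq> 1 / real n) \<longrightarrow>
            real n * (\<Sum>i=1..n. (p i)^2) - 1 > 0
          \<and> 1 / (2 * (real n * sup_norm n p + 1))
              \<le> ((\<Sum>i=1..n. xlogx (p i)) + ln (real n)) / (real n * (\<Sum>i=1..n. (p i)^2) - 1)
          \<and> ((\<Sum>i=1..n. xlogx (p i)) + ln (real n)) / (real n * (\<Sum>i=1..n. (p i)^2) - 1) \<le> 1)"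
proof -
  have nn: "\<And>i. i \<in> {1..n} \<Longrightarrow> 0 \<le> p i" and s1: "(\<Sum>i=1..n. p i) = 1"
    using assms unfolding prob_simplex_def by auto
  have n1: "n \<ge> 1"
  proof (rule ccontr)
    assume "\<not> n \<ge> 1" then have "n = 0" by simp
    then show False using s1 by simp
  qed
  have n0: "real n \<ge> 1" using n1 by simp
  define M where "M = sup_norm n p"
  have pM: "p i \<le> M" if "i \<in> {1..n}" for i
  proof -
    have "\<bar>p i\<bar> \<le> M" unfolding M_def sup_norm_def using that by (intro Max_ge) auto
    then show ?thesis by simp
  qed
  have M0: "M \<ge> 0" using pM[of 1] nn[of 1] n1 by simp
  define c where "c = real n * M + 1"
  have c1: "c \<ge> 1" unfolding c_def using M0 n0 by simp
  define Q where "Q = (\<Sum>i=1..n. (p i)^2)"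
  define T where "T = (\<Sum>i=1..n. xlogx (p i)) + ln (real n)"
  define D where "D = real n * Q - 1"
  have T_eq: "T = (\<Sum>i=1..n. xlogx (p i) + p i * ln (real n))"
    unfolding T_def sum.distrib sum_distrib_right[symmetric] s1 by simp
  have "T \<le> (\<Sum>i=1..n. real n * (p i)^2 - p i)"
    unfolding T_eq using pt(2)[OF n1 nn pM] by (intro sum_mono) auto
  also have "\<dots> = D" unfolding D_def Q_def sum_subtractf s1 sum_distrib_left by simp
  finally have up: "T \<le> D" .
  have sq: "(\<Sum>i=1..n. (real n * p i - 1)^2) = real n * D"
  proof -
    have "(\<Sum>i=1..n. (real n * p i - 1)^2) = (\<Sum>i=1..n. real n^2 * (p i)^2 - 2 * real n * p i + 1)"
      by (intro sum.cong) (auto simp: power2_eq_square algebra_simps)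
    also have "\<dots> = real n^2 * Q - 2 * real n * 1 + real n"
      unfolding sum.distrib sum_subtractf sum_distrib_left[symmetric] s1 Q_def by simp
    finally show ?thesis unfolding D_def by (simp add: power2_eq_square algebra_simps)
  qed
  have "(\<Sum>i=1..n. (real n * p i - 1)^2/(2*c*real n) + p i - 1/real n) \<le> T"
    unfolding T_eq c_def using pt(1)[OF n1 nn pM] by (intro sum_mono) auto
  moreover have "(\<Sum>i=1..n. (real n * p i - 1)^2/(2*c*real n) + p i - 1/real n) = D / (2*c)"
  proof -
    have "(\<Sum>i=1..n. (real n * p i - 1)^2/(2*c*real n) + p i - 1/real n)
        = (\<Sum>i=1..n. (real n * p i - 1)^2)/(2*c*real n) + 1 - real n * (1/real n)"
      unfolding sum.distrib sum_subtractf sum_divide_distrib[symmetric] s1 by simp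
    also have "\<dots> = D / (2*c)" unfolding sq using n0 by simp
    finally show ?thesis .
  qed
  ultimately have lo: "D / (2*c) \<le> T" by simp
  have part3: "D > 0 \<and> 1 / (2*c) \<le> T / D \<and> T / D \<le> 1" if ex: "\<exists>i\<in>{1..n}. p i \<noteq> 1 / real n"
  proof -
    obtain j where j: "j \<in> {1..n}" "p j \<noteq> 1 / real n" using ex by blast
    have "real n * p j - 1 \<noteq> 0" using j n0 by (auto simp: field_simps)
    then have "(real n * p j - 1)^2 > 0" by simp
    moreover have "(real n * p j - 1)^2 \<le> (\<Sum>i=1..n. (real n * p i - 1)^2)"
      using j(1) by (intro member_le_sum) auto
    ultimately have "real n * D > 0" unfolding sq[symmetric] by linarith
    then have Dp: "D > 0" using n0 by (simp add: zero_less_mult_iff)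
    have "1 / (2*c) = (D/(2*c)) / D" using Dp by simp
    also have "\<dots> \<le> T / D" using lo Dp by (intro divide_right_mono) auto
    finally have "1 / (2*c) \<le> T / D" .
    moreover have "T / D \<le> 1" using up Dp by simp
    ultimately show ?thesis using Dp by simp
  qed
  show ?thesis using lo up part3 unfolding T_def D_def Q_def c_def M_def by simp
qed

end
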